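(* Let $G$ be a connected simple cubic graph such that the Petersen graph $P$ admits a $G$-coloring. Then $G$ is isomorphic to $P$.
   Context: A simple graph has no loops and no parallel edges; a cubic graph is $3$-regular. For a graph $X$ and vertex $x$, $\partial_X(x)$ denotes the set of edges of $X$ incident to $x$. For cubic graphs $G, H$ (loopless, parallel edges allowed), an $H$-coloring of $G$ is a map $f: E(G)\to E(H)$ such that for every vertex $x$ of $G$ there is a vertex $y$ of $H$ with $f(\partial_G(x))=\partial_H(y)$. $P$ denotes the Petersen graph. *)

theory Defs
  imports Main
begin

text \<open>Parallel edges are allowed (ends need not be injective).\<close>

definition mgraph :: "'v set \<Rightarrow> 'e set \<Rightarrow> ('e \<Rightarrow> 'v set) \<Rightarrow> bool" where
  "mgraph V E ends \<longleftrightarrow> finite V \<and> finite E \<and>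
     (\<forall>e\<in>E. ends e \<subseteq> V \<and> card (ends e) = 2)"

definition incid :: "'e set \<Rightarrow> ('e \<Rightarrow> 'v set) \<Rightarrow> 'v \<Rightarrow> 'e set" where
  "incid E ends x = {e\<in>E. x \<in> ends e}"

definition cubic :: "'v set \<Rightarrow> 'e set \<Rightarrow> ('e \<Rightarrow> 'v set) \<Rightarrow> bool" where
  "cubic V E ends \<longleftrightarrow> mgraph V E ends \<and> (\<forall>x\<in>V. card (incid E ends x) = 3)"

text \<open>Simple: no parallel edges (loops are excluded already).\<close>
definition simple :: "'v set \<Rightarrow> 'e set \<Rightarrow> ('e \<Rightarrow> 'v set) \<Rightarrow> bool" where
  "simple V E ends \<longleftrightarrow> mgraph V E ends \<and> inj_on ends E"

definition adj_rel :: "'e set \<Rightarrow> ('e \<Rightarrow> 'v set) \<Rightarrow> ('v \<times> 'v) set" where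
  "adj_rel E ends = {(u, w). \<exists>e\<in>E. ends e = {u, w}}"

definition connected_graph :: "'v set \<Rightarrow> 'e set \<Rightarrow> ('e \<Rightarrow> 'v set) \<Rightarrow> bool" where
  "connected_graph V E ends \<longleftrightarrow> (\<forall>x\<in>V. \<forall>y\<in>V. (x, y) \<in> (adj_rel E ends)\<^sup>*)"

definition H_coloring ::
  "'v set \<Rightarrow> 'e set \<Rightarrow> ('e \<Rightarrow> 'v set) \<Rightarrow> 'w set \<Rightarrow> 'd set \<Rightarrow> ('d \<Rightarrow> 'w set) \<Rightarrow> ('e \<Rightarrow> 'd) \<Rightarrow> bool"
  where
  "H_coloring VG EG endsG VH EH endsH f \<longleftrightarrow>
     (\<forall>e\<in>EG. f e \<in> EH) \<and>
     (\<forall>x\<in>VG. \<exists>y\<in>VH. f ` incid EG endsG x = incid EH endsH y)"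

definition graph_iso ::
  "'v set \<Rightarrow> 'e set \<Rightarrow> ('e \<Rightarrow> 'v set) \<Rightarrow> 'w set \<Rightarrow> 'd set \<Rightarrow> ('d \<Rightarrow> 'w set) \<Rightarrow> bool"
  where
  "graph_iso V1 E1 ends1 V2 E2 ends2 \<longleftrightarrow>
     (\<exists>\<phi> \<psi>. bij_betw \<phi> V1 V2 \<and> bij_betw \<psi> E1 E2 \<and>
        (\<forall>e\<in>E1. ends2 (\<psi> e) = \<phi> ` ends1 e))"

text \<open>The Petersen graph (Kneser graph K(5,2)): vertices are the 2-subsets of {0,..,4},
  two vertices adjacent iff disjoint; an edge is the set of its two endpoints.\<close>
definition petersen_V :: "nat set set" where
  "petersen_V = {S. S \<subseteq> {0..<5} \<and> card S = 2}"

definition petersen_E :: "nat set set set" where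
  "petersen_E = {{a, b} | a b. a \<in> petersen_V \<and> b \<in> petersen_V \<and> a \<inter> b = {}}"

definition petersen_ends :: "nat set set \<Rightarrow> nat set set" where
  "petersen_ends e = e"

end

theory Submission
  imports Defs
begin

definition pvl :: "nat set list" where
 "pvl = [{0,1},{0,2},{0,3},{0,4},{1,2},{1,3},{1,4},{2,3},{2,4},{3,4}]"
definition pv :: "nat \<Rightarrow> nat set" where "pv i = pvl ! i"
definition ea :: "nat \<Rightarrow> nat" where "ea k = [0,0,0,1,1,1,2,2,2,3,3,3,4,5,6] ! k"
definition eb :: "nat \<Rightarrow> nat" where "eb k = [7,8,9,5,6,9,4,6,8,4,5,7,9,8,7] ! k"
definition pe :: "nat \<Rightarrow> nat set set" where "pe k = {pv (ea k), pv (eb k)}"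
definition s1 :: "nat \<Rightarrow> nat" where "s1 i = [0,3,6,9,6,3,4,0,1,2] ! i"
definition s2 :: "nat \<Rightarrow> nat" where "s2 i = [1,4,7,10,9,10,7,11,8,5] ! i"
definition s3 :: "nat \<Rightarrow> nat" where "s3 i = [2,5,8,11,12,13,14,14,13,12] ! i"

lemma upto10: "{0..<10::nat} = {0,1,2,3,4,5,6,7,8,9}"
  by (simp add: atLeastLessThan_upt upt_conv_Cons eval_nat_numeral)
lemma upto15: "{0..<15::nat} = {0,1,2,3,4,5,6,7,8,9,10,11,12,13,14}"
  by (simp add: atLeastLessThan_upt upt_conv_Cons eval_nat_numeral)

lemma PV_expl: "pv ` {0..<10} = {{0,1}, {0,2}, {0,3}, {0,4}, {1,2}, {1,3}, {1,4}, {2,3}, {2,4}, {3,4}}"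
  by (simp add: upto10 pv_def pvl_def)

lemma PV: "petersen_V = pv ` {0..<10}"
proof
  show "pv ` {0..<10} \<subseteq> petersen_V"
    unfolding PV_expl petersen_V_def by simp
next
  show "petersen_V \<subseteq> pv ` {0..<10}"
  proof
    fix S assume "S \<in> petersen_V"
    then have S: "S \<subseteq> {0..<5}" "card S = 2" by (auto simp: petersen_V_def)
    then obtain x y where xy: "S = {x,y}" "x \<noteq> y" by (meson card_2_iff)
    with S have "x < 5" "y < 5" by auto
    then have "x = 0 \<or> x = 1 \<or> x = 2 \<or> x = 3 \<or> x = 4" "y = 0 \<or> y = 1 \<or> y = 2 \<or> y = 3 \<or> y = 4" by auto
    with xy show "S \<in> pv ` {0..<10}" unfolding PV_expl
      by (elim disjE; simp add: insert_commute)
  qed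
qed

lemma edges_ok: "\<forall>k\<in>{0..<15}. pv (ea k) \<inter> pv (eb k) = {} \<and> ea k < 10 \<and> eb k < 10 \<and> ea k \<noteq> eb k"
  by (simp add: upto15 pv_def pvl_def ea_def eb_def)

lemma disj_edge: "\<forall>i\<in>{0..<10}. \<forall>j\<in>{0..<10}. pv i \<inter> pv j = {} \<longrightarrow> (\<exists>k\<in>{0..<15}. {i,j} = {ea k, eb k})"
  unfolding upto10 upto15 ball_simps bex_simps
  by (simp add: pv_def pvl_def ea_def eb_def doubleton_eq_iff)

lemma pv_inj: "inj_on pv {0..<10}"
proof -
  have "\<forall>i\<in>{0..<10}. \<forall>j\<in>{0..<10}. pv i = pv j \<longrightarrow> i = j"
    unfolding upto10 ball_simps by (simp add: pv_def pvl_def doubleton_eq_iff)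
  then show ?thesis unfolding inj_on_def by blast
qed

lemma pe_inj: "inj_on pe {0..<15}"
proof -
  have "\<forall>i\<in>{0..<15}. \<forall>j\<in>{0..<15}. pe i = pe j \<longrightarrow> i = j"
    unfolding upto15 ball_simps by (simp add: pe_def pv_def pvl_def ea_def eb_def doubleton_eq_iff)
  then show ?thesis unfolding inj_on_def by blast
qed

lemma PE: "petersen_E = pe ` {0..<15}"
proof
  show "pe ` {0..<15} \<subseteq> petersen_E"
  proof
    fix e assume "e \<in> pe ` {0..<15}"
    then obtain k where k: "k \<in> {0..<15}" "e = pe k" by blast
    with edges_ok have "pv (ea k) \<in> petersen_V" "pv (eb k) \<in> petersen_V" "pv (ea k) \<inter> pv (eb k) = {}"
      unfolding PV by auto
    then show "e \<in> petersen_E" unfolding petersen_E_def k pe_def by blast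
  qed
next
  show "petersen_E \<subseteq> pe ` {0..<15}"
  proof
    fix e assume "e \<in> petersen_E"
    then obtain i j where ij: "e = {pv i, pv j}" "i \<in> {0..<10}" "j \<in> {0..<10}" "pv i \<inter> pv j = {}"
      unfolding petersen_E_def PV by blast
    with disj_edge obtain k where "k \<in> {0..<15}" "{i,j} = {ea k, eb k}" by blast
    then show "e \<in> pe ` {0..<15}" unfolding ij pe_def by (auto simp: doubleton_eq_iff)
  qed
qed

lemma star_idx: "\<forall>i\<in>{0..<10}. \<forall>k\<in>{0..<15}. (i = ea k \<or> i = eb k) \<longleftrightarrow> (k = s1 i \<or> k = s2 i \<or> k = s3 i)"
  unfolding upto10 upto15 ball_simps by (simp add: ea_def eb_def s1_def s2_def s3_def)

lemma s_lt: "\<forall>i\<in>{0..<10}. s1 i < 15 \<and> s2 i < 15 \<and> s3 i < 15"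
  unfolding upto10 ball_simps by (simp add: s1_def s2_def s3_def)

lemma incidP: assumes "i < 10"
  shows "incid petersen_E petersen_ends (pv i) = pe ` {s1 i, s2 i, s3 i}"
proof
  show "incid petersen_E petersen_ends (pv i) \<subseteq> pe ` {s1 i, s2 i, s3 i}"
  proof
    fix e assume "e \<in> incid petersen_E petersen_ends (pv i)"
    then obtain k where k: "k < 15" "e = pe k" "pv i \<in> pe k"
      unfolding incid_def petersen_ends_def PE by auto
    then have "pv i = pv (ea k) \<or> pv i = pv (eb k)" unfolding pe_def by auto
    moreover have "ea k < 10" "eb k < 10" using edges_ok k by auto
    ultimately have "i = ea k \<or> i = eb k" using pv_inj assms unfolding inj_on_def by auto
    then have "k = s1 i \<or> k = s2 i \<or> k = s3 i" using star_idx assms k by auto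
    then show "e \<in> pe ` {s1 i, s2 i, s3 i}" using k by auto
  qed
next
  show "pe ` {s1 i, s2 i, s3 i} \<subseteq> incid petersen_E petersen_ends (pv i)"
  proof
    fix e assume "e \<in> pe ` {s1 i, s2 i, s3 i}"
    then obtain k where k: "e = pe k" "k = s1 i \<or> k = s2 i \<or> k = s3 i" by auto
    then have k15: "k < 15" using s_lt assms by auto
    have "i = ea k \<or> i = eb k" using star_idx assms k k15 by auto
    then have "pv i \<in> pe k" unfolding pe_def by auto
    then show "e \<in> incid petersen_E petersen_ends (pv i)"
      unfolding incid_def petersen_ends_def PE using k k15 by auto
  qed
qed

lemma core:
 fixes g :: "nat \<Rightarrow> 'v" and f :: "nat \<Rightarrow> 'e" and I :: "'v \<Rightarrow> 'e \<Rightarrow> bool"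
 assumes L1: "\<forall>y y' d d'. I y d \<and> I y' d \<and> I y d' \<and> I y' d' \<and> d \<noteq> d' \<longrightarrow> y = y'"
 and L2: "\<forall>y1 y2 y3 d. I y1 d \<and> I y2 d \<and> I y3 d \<longrightarrow> y1 = y2 \<or> y1 = y3 \<or> y2 = y3"
 and ST: "\<forall>i<10. I (g i) (f (s1 i)) \<and> I (g i) (f (s2 i)) \<and> I (g i) (f (s3 i)) \<and> f (s1 i) \<noteq> f (s2 i) \<and> f (s1 i) \<noteq> f (s3 i) \<and> f (s2 i) \<noteq> f (s3 i) \<and> (\<forall>d. I (g i) d \<longrightarrow> d = f (s1 i) \<or> d = f (s2 i) \<or> d = f (s3 i))"
 shows "inj_on g {0..<10} \<and> inj_on f {0..<15}"
proof -
 have D: "g 0 \<noteq> g 1 \<and> g 1 \<noteq> g 0 \<and> g 0 \<noteq> g 2 \<and> g 2 \<noteq> g 0 \<and> g 0 \<noteq> g 3 \<and> g 3 \<noteq> g 0 \<and> g 0 \<noteq> g 4 \<and> g 4 \<noteq> g 0 \<and> g 0 \<noteq> g 5 \<and> g 5 \<noteq> g 0 \<and> g 0 \<noteq> g 6 \<and> g 6 \<noteq> g 0 \<and> g 0 \<noteq> g 7 \<and> g 7 \<noteq> g 0 \<and> g 0 \<noteq> g 8 \<and> g 8 \<noteq> g 0 \<and> g 0 \<noteq> g 9 \<and> g 9 \<noteq> g 0 \<and> g 1 \<noteq> g 2 \<and> g 2 \<noteq> g 1 \<and> g 1 \<noteq> g 3 \<and> g 3 \<noteq> g 1 \<and> g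 1 \<noteq> g 4 \<and> g 4 \<noteq> g 1 \<and> g 1 \<noteq> g 5 \<and> g 5 \<noteq> g 1 \<and> g 1 \<noteq> g 6 \<and> g 6 \<noteq> g 1 \<and> g 1 \<noteq> g 7 \<and> g 7 \<noteq> g 1 \<and> g 1 \<noteq> g 8 \<and> g 8 \<noteq> g 1 \<and> g 1 \<noteq> g 9 \<and> g 9 \<noteq> g 1 \<and> g 2 \<noteq> g 3 \<and> g 3 \<noteq> g 2 \<and> g 2 \<noteq> g 4 \<and> g 4 \<noteq> g 2 \<and> g 2 \<noteq> g 5 \<and> g 5 \<noteq> g 2 \<and> g 2 \<noteq> g 6 \<and> g 6 \<noteq> g 2 \<and> g 2 \<noteq> g 7 \<and> g 7 \<noteq> g 2 \<and> g 2 \<noteq> g 8 \<and> g 8 \<noteq> g 2 \<and> g 2 \<noteq> g 9 \<and> g 9 \<noteq> g 2 \<and> g 3 \<noteq> g 4 \<and> g 4 \<noteq> g 3 \<and> g 3 \<noteq> g 5 \<and> g 5 \<noteq> g 3 \<and> g 3 \<noteq> g 6 \<and> g 6 \<noteq> g 3 \<and> g 3 \<noteq> g 7 \<and> g 7 \<noteq> g 3 \<and> g 3 \<noteq> g 8 \<and> g 8 \<noteq> g 3 \<and> g 3 \<noteq> g 9 \<and> g 9 \<noteq> g 3 \<and> g 4 \<noteq> g 5 \<and> g 5 \<noteq> g 4 \<and> g 4 \<noteq> g 6 \<and> g 6 \<noteq> g 4 \<and> g 4 \<noteq> g 7 \<and> g 7 \<noteq> g 4 \<and> g 4 \<noteq>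 g 8 \<and> g 8 \<noteq> g 4 \<and> g 4 \<noteq> g 9 \<and> g 9 \<noteq> g 4 \<and> g 5 \<noteq> g 6 \<and> g 6 \<noteq> g 5 \<and> g 5 \<noteq> g 7 \<and> g 7 \<noteq> g 5 \<and> g 5 \<noteq> g 8 \<and> g 8 \<noteq> g 5 \<and> g 5 \<noteq> g 9 \<and> g 9 \<noteq> g 5 \<and> g 6 \<noteq> g 7 \<and> g 7 \<noteq> g 6 \<and> g 6 \<noteq> g 8 \<and> g 8 \<noteq> g 6 \<and> g 6 \<noteq> g 9 \<and> g 9 \<noteq> g 6 \<and> g 7 \<noteq> g 8 \<and> g 8 \<noteq> g 7 \<and> g 7 \<noteq> g 9 \<and> g 9 \<noteq> g 7 \<and> g 8 \<noteq> g 9 \<and> g 9 \<noteq> g 8 \<and> f 0 \<noteq> f 1 \<and> f 1 \<noteq> f 0 \<and> f 0 \<noteq> f 2 \<and> f 2 \<noteq> f 0 \<and> f 0 \<noteq> f 3 \<and> f 3 \<noteq> f 0 \<and> f 0 \<noteq> f 4 \<and> f 4 \<noteq> f 0 \<and> f 0 \<noteq> f 5 \<and> f 5 \<noteq> f 0 \<and> f 0 \<noteq> f 6 \<and> f 6 \<noteq> f 0 \<and> f 0 \<noteq> f 7 \<and> f 7 \<noteq> f 0 \<and> f 0 \<noteq> f 8 \<and> f 8 \<noteq> f 0 \<and> f 0 \<noteq> f 9 \<and> f 9 \<noteq> f 0 \<and> f 0 \<noteq> f 10 \<and> f 10 \<noteq> f 0 \<and> f 0 \<noteq> f 11 \<and>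 f 11 \<noteq> f 0 \<and> f 0 \<noteq> f 12 \<and> f 12 \<noteq> f 0 \<and> f 0 \<noteq> f 13 \<and> f 13 \<noteq> f 0 \<and> f 0 \<noteq> f 14 \<and> f 14 \<noteq> f 0 \<and> f 1 \<noteq> f 2 \<and> f 2 \<noteq> f 1 \<and> f 1 \<noteq> f 3 \<and> f 3 \<noteq> f 1 \<and> f 1 \<noteq> f 4 \<and> f 4 \<noteq> f 1 \<and> f 1 \<noteq> f 5 \<and> f 5 \<noteq> f 1 \<and> f 1 \<noteq> f 6 \<and> f 6 \<noteq> f 1 \<and> f 1 \<noteq> f 7 \<and> f 7 \<noteq> f 1 \<and> f 1 \<noteq> f 8 \<and> f 8 \<noteq> f 1 \<and> f 1 \<noteq> f 9 \<and> f 9 \<noteq> f 1 \<and> f 1 \<noteq> f 10 \<and> f 10 \<noteq> f 1 \<and> f 1 \<noteq> f 11 \<and> f 11 \<noteq> f 1 \<and> f 1 \<noteq> f 12 \<and> f 12 \<noteq> f 1 \<and> f 1 \<noteq> f 13 \<and> f 13 \<noteq> f 1 \<and> f 1 \<noteq> f 14 \<and> f 14 \<noteq> f 1 \<and> f 2 \<noteq> f 3 \<and> f 3 \<noteq> f 2 \<and> f 2 \<noteq> f 4 \<and> f 4 \<noteq> f 2 \<and> f 2 \<noteq> f 5 \<and> f 5 \<noteq> f 2 \<and> f 2 \<noteq> f 6 \<and> f 6 \<noteq> f 2 \<and> f 2 \<noteq> f 7 \<and> f 7 \<noteq> f 2 \<and> f 2 \<noteq> f 8 \<and> f 8 \<noteq>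 f 2 \<and> f 2 \<noteq> f 9 \<and> f 9 \<noteq> f 2 \<and> f 2 \<noteq> f 10 \<and> f 10 \<noteq> f 2 \<and> f 2 \<noteq> f 11 \<and> f 11 \<noteq> f 2 \<and> f 2 \<noteq> f 12 \<and> f 12 \<noteq> f 2 \<and> f 2 \<noteq> f 13 \<and> f 13 \<noteq> f 2 \<and> f 2 \<noteq> f 14 \<and> f 14 \<noteq> f 2 \<and> f 3 \<noteq> f 4 \<and> f 4 \<noteq> f 3 \<and> f 3 \<noteq> f 5 \<and> f 5 \<noteq> f 3 \<and> f 3 \<noteq> f 6 \<and> f 6 \<noteq> f 3 \<and> f 3 \<noteq> f 7 \<and> f 7 \<noteq> f 3 \<and> f 3 \<noteq> f 8 \<and> f 8 \<noteq> f 3 \<and> f 3 \<noteq> f 9 \<and> f 9 \<noteq> f 3 \<and> f 3 \<noteq> f 10 \<and> f 10 \<noteq> f 3 \<and> f 3 \<noteq> f 11 \<and> f 11 \<noteq> f 3 \<and> f 3 \<noteq> f 12 \<and> f 12 \<noteq> f 3 \<and> f 3 \<noteq> f 13 \<and> f 13 \<noteq> f 3 \<and> f 3 \<noteq> f 14 \<and> f 14 \<noteq> f 3 \<and> f 4 \<noteq> f 5 \<and> f 5 \<noteq> f 4 \<and> f 4 \<noteq> f 6 \<and> f 6 \<noteq> f 4 \<and> f 4 \<noteq> f 7 \<and> f 7 \<noteq> f 4 \<and> f 4 \<noteq> f 8 \<and> f 8 \<noteq> f 4 \<and> f 4 \<noteq> f 9 \<and> f 9 \<noteq> f 4 \<and>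 f 4 \<noteq> f 10 \<and> f 10 \<noteq> f 4 \<and> f 4 \<noteq> f 11 \<and> f 11 \<noteq> f 4 \<and> f 4 \<noteq> f 12 \<and> f 12 \<noteq> f 4 \<and> f 4 \<noteq> f 13 \<and> f 13 \<noteq> f 4 \<and> f 4 \<noteq> f 14 \<and> f 14 \<noteq> f 4 \<and> f 5 \<noteq> f 6 \<and> f 6 \<noteq> f 5 \<and> f 5 \<noteq> f 7 \<and> f 7 \<noteq> f 5 \<and> f 5 \<noteq> f 8 \<and> f 8 \<noteq> f 5 \<and> f 5 \<noteq> f 9 \<and> f 9 \<noteq> f 5 \<and> f 5 \<noteq> f 10 \<and> f 10 \<noteq> f 5 \<and> f 5 \<noteq> f 11 \<and> f 11 \<noteq> f 5 \<and> f 5 \<noteq> f 12 \<and> f 12 \<noteq> f 5 \<and> f 5 \<noteq> f 13 \<and> f 13 \<noteq> f 5 \<and> f 5 \<noteq> f 14 \<and> f 14 \<noteq> f 5 \<and> f 6 \<noteq> f 7 \<and> f 7 \<noteq> f 6 \<and> f 6 \<noteq> f 8 \<and> f 8 \<noteq> f 6 \<and> f 6 \<noteq> f 9 \<and> f 9 \<noteq> f 6 \<and> f 6 \<noteq> f 10 \<and> f 10 \<noteq> f 6 \<and> f 6 \<noteq> f 11 \<and> f 11 \<noteq> f 6 \<and> f 6 \<noteq> f 12 \<and> f 12 \<noteq> f 6 \<and> f 6 \<noteq> f 13 \<and> f 13 \<noteq> f 6 \<and> f 6 \<noteq> f 14 \<and> f 14 \<noteq> f 6 \<and> f 7 \<noteq>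 f 8 \<and> f 8 \<noteq> f 7 \<and> f 7 \<noteq> f 9 \<and> f 9 \<noteq> f 7 \<and> f 7 \<noteq> f 10 \<and> f 10 \<noteq> f 7 \<and> f 7 \<noteq> f 11 \<and> f 11 \<noteq> f 7 \<and> f 7 \<noteq> f 12 \<and> f 12 \<noteq> f 7 \<and> f 7 \<noteq> f 13 \<and> f 13 \<noteq> f 7 \<and> f 7 \<noteq> f 14 \<and> f 14 \<noteq> f 7 \<and> f 8 \<noteq> f 9 \<and> f 9 \<noteq> f 8 \<and> f 8 \<noteq> f 10 \<and> f 10 \<noteq> f 8 \<and> f 8 \<noteq> f 11 \<and> f 11 \<noteq> f 8 \<and> f 8 \<noteq> f 12 \<and> f 12 \<noteq> f 8 \<and> f 8 \<noteq> f 13 \<and> f 13 \<noteq> f 8 \<and> f 8 \<noteq> f 14 \<and> f 14 \<noteq> f 8 \<and> f 9 \<noteq> f 10 \<and> f 10 \<noteq> f 9 \<and> f 9 \<noteq> f 11 \<and> f 11 \<noteq> f 9 \<and> f 9 \<noteq> f 12 \<and> f 12 \<noteq> f 9 \<and> f 9 \<noteq> f 13 \<and> f 13 \<noteq> f 9 \<and> f 9 \<noteq> f 14 \<and> f 14 \<noteq> f 9 \<and> f 10 \<noteq> f 11 \<and> f 11 \<noteq> f 10 \<and> f 10 \<noteq> f 12 \<and> f 12 \<noteq> f 10 \<and> f 10 \<noteq> f 13 \<and> f 13 \<noteq> f 10 \<and> f 10 \<noteq> f 14 \<and> f 14 \<noteq> f 10 \<and> f 11 \<noteq> f 12 \<and>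 f 12 \<noteq> f 11 \<and> f 11 \<noteq> f 13 \<and> f 13 \<noteq> f 11 \<and> f 11 \<noteq> f 14 \<and> f 14 \<noteq> f 11 \<and> f 12 \<noteq> f 13 \<and> f 13 \<noteq> f 12 \<and> f 12 \<noteq> f 14 \<and> f 14 \<noteq> f 12 \<and> f 13 \<noteq> f 14 \<and> f 14 \<noteq> f 13"
 proof -
  have v0: "I (g 0) (f 0)" "I (g 0) (f 1)" "I (g 0) (f 2)" "f 0 \<noteq> f 1" "f 0 \<noteq> f 2" "f 1 \<noteq> f 2" "\<forall>d. I (g 0) d \<longrightarrow> d = f 0 \<or> d = f 1 \<or> d = f 2"
    using ST[rule_format, of 0] by (simp_all add: s1_def s2_def s3_def)
  have v1: "I (g 1) (f 3)" "I (g 1) (f 4)" "I (g 1) (f 5)" "f 3 \<noteq> f 4" "f 3 \<noteq> f 5" "f 4 \<noteq> f 5" "\<forall>d. I (g 1) d \<longrightarrow> d = f 3 \<or> d = f 4 \<or> d = f 5"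
    using ST[rule_format, of 1] by (simp_all add: s1_def s2_def s3_def)
  have v2: "I (g 2) (f 6)" "I (g 2) (f 7)" "I (g 2) (f 8)" "f 6 \<noteq> f 7" "f 6 \<noteq> f 8" "f 7 \<noteq> f 8" "\<forall>d. I (g 2) d \<longrightarrow> d = f 6 \<or> d = f 7 \<or> d = f 8"
    using ST[rule_format, of 2] by (simp_all add: s1_def s2_def s3_def)
  have v3: "I (g 3) (f 9)" "I (g 3) (f 10)" "I (g 3) (f 11)" "f 9 \<noteq> f 10" "f 9 \<noteq> f 11" "f 10 \<noteq> f 11" "\<forall>d. I (g 3) d \<longrightarrow> d = f 9 \<or> d = f 10 \<or> d = f 11"
    using ST[rule_format, of 3] by (simp_all add: s1_def s2_def s3_def)
  have v4: "I (g 4) (f 6)" "I (g 4) (f 9)" "I (g 4) (f 12)" "f 6 \<noteq> f 9" "f 6 \<noteq> f 12" "f 9 \<noteq> f 12" "\<forall>d. I (g 4) d \<longrightarrow> d = f 6 \<or> d = f 9 \<or> d = f 12"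
    using ST[rule_format, of 4] by (simp_all add: s1_def s2_def s3_def)
  have v5: "I (g 5) (f 3)" "I (g 5) (f 10)" "I (g 5) (f 13)" "f 3 \<noteq> f 10" "f 3 \<noteq> f 13" "f 10 \<noteq> f 13" "\<forall>d. I (g 5) d \<longrightarrow> d = f 3 \<or> d = f 10 \<or> d = f 13"
    using ST[rule_format, of 5] by (simp_all add: s1_def s2_def s3_def)
  have v6: "I (g 6) (f 4)" "I (g 6) (f 7)" "I (g 6) (f 14)" "f 4 \<noteq> f 7" "f 4 \<noteq> f 14" "f 7 \<noteq> f 14" "\<forall>d. I (g 6) d \<longrightarrow> d = f 4 \<or> d = f 7 \<or> d = f 14"
    using ST[rule_format, of 6] by (simp_all add: s1_def s2_def s3_def)
  have v7: "I (g 7) (f 0)" "I (g 7) (f 11)" "I (g 7) (f 14)" "f 0 \<noteq> f 11" "f 0 \<noteq> f 14" "f 11 \<noteq> f 14" "\<forall>d. I (g 7) d \<longrightarrow> d = f 0 \<or> d = f 11 \<or> d = f 14"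
    using ST[rule_format, of 7] by (simp_all add: s1_def s2_def s3_def)
  have v8: "I (g 8) (f 1)" "I (g 8) (f 8)" "I (g 8) (f 13)" "f 1 \<noteq> f 8" "f 1 \<noteq> f 13" "f 8 \<noteq> f 13" "\<forall>d. I (g 8) d \<longrightarrow> d = f 1 \<or> d = f 8 \<or> d = f 13"
    using ST[rule_format, of 8] by (simp_all add: s1_def s2_def s3_def)
  have v9: "I (g 9) (f 2)" "I (g 9) (f 5)" "I (g 9) (f 12)" "f 2 \<noteq> f 5" "f 2 \<noteq> f 12" "f 5 \<noteq> f 12" "\<forall>d. I (g 9) d \<longrightarrow> d = f 2 \<or> d = f 5 \<or> d = f 12"
    using ST[rule_format, of 9] by (simp_all add: s1_def s2_def s3_def)
  show ?thesis using L1 L2 v0 v1 v2 v3 v4 v5 v6 v7 v8 v9 by (smt (z3))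
qed
 have "\<forall>i\<in>{0..<10}. \<forall>j\<in>{0..<10}. g i = g j \<longrightarrow> i = j"
   unfolding upto10 ball_simps using D by simp
 moreover have "\<forall>i\<in>{0..<15}. \<forall>j\<in>{0..<15}. f i = f j \<longrightarrow> i = j"
   unfolding upto15 ball_simps using D by simp
 ultimately show ?thesis unfolding inj_on_def by blast
qed


lemma card2_eq: assumes "card A = 2" "y \<in> A" "y' \<in> A" "y \<noteq> y'" shows "A = {y, y'}"
proof -
  obtain a b where ab: "A = {a,b}" "a \<noteq> b" using assms(1) by (meson card_2_iff)
  then show ?thesis using assms by auto
qed

lemma card2_three: assumes "card A = 2" "a \<in> A" "b \<in> A" "c \<in> A" shows "a = b \<or> a = c \<or> b = c"
proof -
  obtain x y where "A = {x,y}" using assms(1) by (meson card_2_iff)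
  then show ?thesis using assms by auto
qed

theorem theorem5:
  fixes V :: "'v set" and E :: "'e set" and ends :: "'e \<Rightarrow> 'v set"
  assumes "cubic V E ends" and "simple V E ends" and "connected_graph V E ends"
    and "\<exists>f. H_coloring petersen_V petersen_E petersen_ends V E ends f"
  shows "graph_iso V E ends petersen_V petersen_E petersen_ends"
proof -
  obtain f where Hf: "H_coloring petersen_V petersen_E petersen_ends V E ends f"
    using assms(4) by blast
  have mg: "\<forall>e\<in>E. ends e \<subseteq> V \<and> card (ends e) = 2"
    using assms(1) unfolding cubic_def mgraph_def by blast
  have deg: "\<forall>x\<in>V. card (incid E ends x) = 3" using assms(1) unfolding cubic_def by blast
  have injE: "inj_on ends E" using assms(2) unfolding simple_def by blast
  define I where "I = (\<lambda>y d. d \<in> E \<and> y \<in> ends d)"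
  have L1: "\<forall>y y' d d'. I y d \<and> I y' d \<and> I y d' \<and> I y' d' \<and> d \<noteq> d' \<longrightarrow> y = y'"
  proof (intro allI impI)
    fix y y' d d' assume h: "I y d \<and> I y' d \<and> I y d' \<and> I y' d' \<and> d \<noteq> d'"
    show "y = y'"
    proof (rule ccontr)
      assume ne: "y \<noteq> y'"
      have "ends d = {y, y'}" using h ne mg card2_eq unfolding I_def by metis
      moreover have "ends d' = {y, y'}" using h ne mg card2_eq unfolding I_def by metis
      ultimately show False using injE h unfolding I_def inj_on_def by metis
    qed
  qed
  have L2: "\<forall>y1 y2 y3 d. I y1 d \<and> I y2 d \<and> I y3 d \<longrightarrow> y1 = y2 \<or> y1 = y3 \<or> y2 = y3"
    using mg card2_three unfolding I_def by metis
  define F where "F k = f (pe k)" for k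
  define G where "G i = (SOME y. y \<in> V \<and> f ` incid petersen_E petersen_ends (pv i) = incid E ends y)" for i
  have Gprop: "G i \<in> V \<and> f ` incid petersen_E petersen_ends (pv i) = incid E ends (G i)" if "i < 10" for i
  proof -
    have "pv i \<in> petersen_V" using that unfolding PV by auto
    then have "\<exists>y. y \<in> V \<and> f ` incid petersen_E petersen_ends (pv i) = incid E ends y"
      using Hf unfolding H_coloring_def by blast
    then show ?thesis unfolding G_def by (rule someI_ex)
  qed
  have Ginc: "incid E ends (G i) = {F (s1 i), F (s2 i), F (s3 i)}" if "i < 10" for i
    using Gprop[OF that] incidP[OF that] unfolding F_def by (simp add: image_image)
  have ST: "\<forall>i<10. I (G i) (F (s1 i)) \<and> I (G i) (F (s2 i)) \<and> I (G i) (F (s3 i)) \<and> F (s1 i) \<noteq> F (s2 i) \<and> F (s1 i) \<noteq> F (s3 i) \<and> F (s2 i) \<noteq> F (s3 i) \<and> (\<forall>d. I (G i) d \<longrightarrow> d = F (s1 i) \<or> d = F (s2 i) \<or> d = F (s3 i))"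
  proof (intro allI impI)
    fix i :: nat assume i: "i < 10"
    have c: "card {F (s1 i), F (s2 i), F (s3 i)} = 3" using deg Gprop[OF i] Ginc[OF i] by metis
    have mem: "\<And>d. I (G i) d \<longleftrightarrow> d \<in> {F (s1 i), F (s2 i), F (s3 i)}"
      using Ginc[OF i] unfolding I_def incid_def by blast
    have "F (s1 i) \<noteq> F (s2 i) \<and> F (s1 i) \<noteq> F (s3 i) \<and> F (s2 i) \<noteq> F (s3 i)"
      using c by (auto simp: card_insert_if split: if_splits)
    then show "I (G i) (F (s1 i)) \<and> I (G i) (F (s2 i)) \<and> I (G i) (F (s3 i)) \<and> F (s1 i) \<noteq> F (s2 i) \<and> F (s1 i) \<noteq> F (s3 i) \<and> F (s2 i) \<noteq> F (s3 i) \<and> (\<forall>d. I (G i) d \<longrightarrow> d = F (s1 i) \<or> d = F (s2 i) \<or> d = F (s3 i))"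
      using mem by blast
  qed
  note C = core[OF L1 L2 ST]
  have Ginj: "inj_on G {0..<10}" using C by blast
  have Finj: "inj_on F {0..<15}" using C by blast
  have FE: "F k \<in> E" if "k < 15" for k
    using Hf that unfolding H_coloring_def F_def PE by auto
  have endsF: "ends (F k) = {G (ea k), G (eb k)}" if k: "k < 15" for k
  proof -
    have ok: "ea k < 10" "eb k < 10" "ea k \<noteq> eb k" using edges_ok k by auto
    have "pe k \<in> incid petersen_E petersen_ends (pv (ea k))"
      unfolding incid_def petersen_ends_def PE pe_def using k by auto
    then have a: "F k \<in> incid E ends (G (ea k))" using Gprop[OF ok(1)] unfolding F_def by blast
    have "pe k \<in> incid petersen_E petersen_ends (pv (eb k))"
      unfolding incid_def petersen_ends_def PE pe_def using k by auto
    then have b: "F k \<in> incid E ends (G (eb k))" using Gprop[OF ok(2)] unfolding F_def by blast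
    have "G (ea k) \<noteq> G (eb k)" using Ginj ok unfolding inj_on_def by auto
    moreover have "F k \<in> E" "G (ea k) \<in> ends (F k)" "G (eb k) \<in> ends (F k)" using a b unfolding incid_def by auto
    ultimately show ?thesis using mg card2_eq[of "ends (F k)" "G (ea k)" "G (eb k)"] by blast
  qed
  have GV: "G ` {0..<10} = V"
  proof
    show "G ` {0..<10} \<subseteq> V" using Gprop by auto
  next
    have clos: "z \<in> G ` {0..<10}" if wI: "w \<in> G ` {0..<10}" and wz: "(w, z) \<in> adj_rel E ends" for w z
    proof -
      from wI obtain i where i: "i < 10" "w = G i" by (auto simp: image_iff)
      obtain d where d: "d \<in> E" "ends d = {w, z}" using wz unfolding adj_rel_def by auto
      have "d \<in> incid E ends (G i)" using d i unfolding incid_def by auto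
      then have "d \<in> f ` incid petersen_E petersen_ends (pv i)" using Gprop[OF i(1)] by simp
      then obtain k where k: "k < 15" "d = F k" unfolding incid_def PE F_def by auto
      have "z \<in> {G (ea k), G (eb k)}" using endsF[OF k(1)] d k by auto
      moreover have "ea k < 10" "eb k < 10" using edges_ok k by auto
      ultimately show ?thesis by auto
    qed
    show "V \<subseteq> G ` {0..<10}"
    proof
      fix y assume y: "y \<in> V"
      have g0: "G 0 \<in> V" using Gprop[of 0] by simp
      have "(G 0, y) \<in> (adj_rel E ends)\<^sup>*" using assms(3) g0 y unfolding connected_graph_def by blast
      then show "y \<in> G ` {0..<10}"
      proof (induction rule: rtrancl_induct)
        case base then show ?case by force
      next
        case (step y z) then show ?case using clos by blast
      qed
    qed
  qed
  have FEq: "F ` {0..<15} = E"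
  proof
    show "F ` {0..<15} \<subseteq> E" using FE by auto
  next
    show "E \<subseteq> F ` {0..<15}"
    proof
      fix d assume d: "d \<in> E"
      then have "card (ends d) = 2" using mg by auto
      then obtain w where w: "w \<in> ends d" by (metis card_2_iff insertI1)
      then have "w \<in> V" using mg d by auto
      then obtain i where i: "i < 10" "w = G i" using GV by auto
      have "d \<in> incid E ends (G i)" using d w i unfolding incid_def by auto
      then have "d \<in> f ` incid petersen_E petersen_ends (pv i)" using Gprop[OF i(1)] by simp
      then obtain k where k: "k < 15" "d = F k" unfolding incid_def PE F_def by auto
      then show "d \<in> F ` {0..<15}" by auto
    qed
  qed
  define \<phi> where "\<phi> = pv \<circ> the_inv_into {0..<10} G"
  define \<psi> where "\<psi> = pe \<circ> the_inv_into {0..<15} F"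
  have b1: "bij_betw \<phi> V petersen_V"
  proof -
    have "bij_betw (the_inv_into {0..<10} G) V {0..<10}"
      using bij_betw_the_inv_into[of G "{0..<10}" V] Ginj GV unfolding bij_betw_def by blast
    moreover have "bij_betw pv {0..<10} petersen_V" using pv_inj PV unfolding bij_betw_def by blast
    ultimately show ?thesis unfolding \<phi>_def by (rule bij_betw_trans)
  qed
  have b2: "bij_betw \<psi> E petersen_E"
  proof -
    have "bij_betw (the_inv_into {0..<15} F) E {0..<15}"
      using bij_betw_the_inv_into[of F "{0..<15}" E] Finj FEq unfolding bij_betw_def by blast
    moreover have "bij_betw pe {0..<15} petersen_E" using pe_inj PE unfolding bij_betw_def by blast
    ultimately show ?thesis unfolding \<psi>_def by (rule bij_betw_trans)
  qed
  have ec: "\<forall>e\<in>E. petersen_ends (\<psi> e) = \<phi> ` ends e"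
  proof
    fix d assume "d \<in> E"
    then obtain k where k: "k < 15" "d = F k" using FEq by auto
    have ok: "ea k < 10" "eb k < 10" using edges_ok k by auto
    have "\<psi> d = pe k" unfolding \<psi>_def k(2) using the_inv_into_f_f[OF Finj] k by simp
    moreover have "\<phi> (G (ea k)) = pv (ea k)" "\<phi> (G (eb k)) = pv (eb k)"
      unfolding \<phi>_def using the_inv_into_f_f[OF Ginj] ok by simp_all
    ultimately show "petersen_ends (\<psi> d) = \<phi> ` ends d"
      unfolding petersen_ends_def k(2) endsF[OF k(1)] pe_def by simp
  qed
  show ?thesis unfolding graph_iso_def using b1 b2 ec by blast
qed

end
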